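(* Let $A$ and $B$ be finite-dimensional Hilbert spaces. For any $\sigma\in\mathrm{S}(A)$, any $\rho\in\mathrm{S}_\sigma(A)$ and any $\mathcal{N}\in\mathrm{TPCP}(A,B)$, the function $\mathrm{TPCP}(B,A)\ni\mathcal{T}\mapsto\Delta_{\mathcal{T},\sigma,\mathcal{N}}(\rho)$, where \[ \Delta_{\mathcal{T},\sigma,\mathcal{N}}(\rho):=D(\rho\|\sigma)-D\bigl(\mathcal{N}(\rho)\|\mathcal{N}(\sigma)\bigr)-D_{\mathbb{M}}\bigl(\rho\,\|\,(\mathcal{T}\circ\mathcal{N})(\rho)\bigr), \] is upper semicontinuous.
   Context: $\mathrm{S}(A)$: density operators on $A$; $\mathrm{TPCP}(A,B)$: quantum channels from $A$ to $B$. $\mathrm{S}_\sigma(A):=\{\rho\in\mathrm{S}(A):\mathrm{supp}(\rho)\subseteq\mathrm{supp}(\sigma)\}$. $D(\rho\|\sigma):=\mathrm{tr}(\rho(\log\rho-\log\sigma))$ if $\mathrm{supp}(\rho)\subseteq\mathrm{supp}(\sigma)$, $+\infty$ otherwise. $D_{\mathbb{M}}(\rho\|\tau):=\sup D(\mathcal{M}(\rho)\|\mathcal{M}(\tau))$ over all finite POVMs $\{M_x\}$ with $\mathcal{M}(\omega)=\sum_x\mathrm{tr}(\omega M_x)|x\rangle\langle x|$. *)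

theory Defs
  imports Complex_Main "Jordan_Normal_Form.Matrix" "HOL-Library.Extended_Real"
begin

section \<open>Finite-dimensional quantum states and channels (A = C^n, B = C^m)\<close>

definition mtrace :: "complex mat \<Rightarrow> complex" where
  "mtrace A = (\<Sum>i<dim_row A. A $$ (i, i))"

definition cadj :: "complex mat \<Rightarrow> complex mat" where
  "cadj A = mat (dim_col A) (dim_row A) (\<lambda>(i, j). cnj (A $$ (j, i)))"

definition cinner :: "complex vec \<Rightarrow> complex vec \<Rightarrow> complex" where
  "cinner v w = (\<Sum>i<dim_vec v. cnj (v $ i) * w $ i)"

definition hermitian :: "nat \<Rightarrow> complex mat \<Rightarrow> bool" where
  "hermitian n A \<longleftrightarrow> A \<in> carrier_mat n n \<and> cadj A = A"

definition psd :: "nat \<Rightarrow> complex mat \<Rightarrow> bool" where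
  "psd n A \<longleftrightarrow> hermitian n A \<and> (\<forall>v \<in> carrier_vec n. 0 \<le> Re (cinner v (A *\<^sub>v v)))"

definition density :: "nat \<Rightarrow> complex mat \<Rightarrow> bool" where
  "density n \<rho> \<longleftrightarrow> psd n \<rho> \<and> mtrace \<rho> = 1"

definition supp :: "complex mat \<Rightarrow> complex vec set" where
  "supp A = {A *\<^sub>v v | v. v \<in> carrier_vec (dim_col A)}"

definition unitary :: "nat \<Rightarrow> complex mat \<Rightarrow> bool" where
  "unitary n U \<longleftrightarrow> U \<in> carrier_mat n n \<and> U * cadj U = 1\<^sub>m n \<and> cadj U * U = 1\<^sub>m n"

definition rdiag :: "nat \<Rightarrow> (nat \<Rightarrow> real) \<Rightarrow> complex mat" where
  "rdiag n d = mat n n (\<lambda>(i, j). if i = j then complex_of_real (d i) else 0)"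

text \<open>Matrix logarithm of a positive semidefinite operator via its spectral decomposition,
  with the usual convention that the logarithm is taken on the support (log 0 := 0 on the kernel).\<close>
definition mat_log :: "complex mat \<Rightarrow> complex mat" where
  "mat_log A = (SOME L. \<exists>U d. unitary (dim_row A) U \<and> A = U * rdiag (dim_row A) d * cadj U \<and>
       L = U * rdiag (dim_row A) (\<lambda>i. if d i > 0 then ln (d i) else 0) * cadj U)"

definition qrel_ent :: "complex mat \<Rightarrow> complex mat \<Rightarrow> ereal" where
  "qrel_ent \<rho> \<sigma> = (if supp \<rho> \<subseteq> supp \<sigma>
      then ereal (Re (mtrace (\<rho> * (mat_log \<rho> - mat_log \<sigma>)))) else \<infinity>)"

definition povm :: "nat \<Rightarrow> nat \<Rightarrow> (nat \<Rightarrow> complex mat) \<Rightarrow> bool" where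
  "povm n k M \<longleftrightarrow> (\<forall>x<k. psd n (M x)) \<and>
     (\<forall>i<n. \<forall>j<n. (\<Sum>x<k. M x $$ (i, j)) = (1\<^sub>m n) $$ (i, j))"

definition meas :: "nat \<Rightarrow> (nat \<Rightarrow> complex mat) \<Rightarrow> complex mat \<Rightarrow> complex mat" where
  "meas k M \<omega> = mat k k (\<lambda>(x, y). if x = y then mtrace (\<omega> * M x) else 0)"

definition meas_rel_ent :: "nat \<Rightarrow> complex mat \<Rightarrow> complex mat \<Rightarrow> ereal" where
  "meas_rel_ent n \<rho> \<tau> = (SUP (k, M) \<in> {(k, M). povm n k M}. qrel_ent (meas k M \<rho>) (meas k M \<tau>))"

text \<open>(id_k \<otimes> N)(X) for X a k x k block matrix with n x n blocks\<close>
definition blockapply :: "nat \<Rightarrow> nat \<Rightarrow> nat \<Rightarrow> (complex mat \<Rightarrow> complex mat) \<Rightarrow> complex mat \<Rightarrow> complex mat" where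
  "blockapply k n m N X = mat (k * m) (k * m) (\<lambda>(p, q).
      N (mat n n (\<lambda>(a, b). X $$ ((p div m) * n + a, (q div m) * n + b))) $$ (p mod m, q mod m))"

definition channel :: "nat \<Rightarrow> nat \<Rightarrow> (complex mat \<Rightarrow> complex mat) \<Rightarrow> bool" where
  "channel n m N \<longleftrightarrow>
     (\<forall>X \<in> carrier_mat n n. N X \<in> carrier_mat m m) \<and>
     (\<forall>X \<in> carrier_mat n n. \<forall>Y \<in> carrier_mat n n. N (X + Y) = N X + N Y) \<and>
     (\<forall>X \<in> carrier_mat n n. \<forall>c. N (c \<cdot>\<^sub>m X) = c \<cdot>\<^sub>m N X) \<and>
     (\<forall>X \<in> carrier_mat n n. mtrace (N X) = mtrace X) \<and>
     (\<forall>k. \<forall>X. psd (k * n) X \<longrightarrow> psd (k * m) (blockapply k n m N X))"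

definition mat_unit :: "nat \<Rightarrow> nat \<Rightarrow> nat \<Rightarrow> complex mat" where
  "mat_unit n a b = mat n n (\<lambda>(i, j). if i = a \<and> j = b then 1 else 0)"

text \<open>a norm distance on linear maps C^{n x n} -> C^{m x m} (all norms are equivalent)\<close>
definition chan_dist :: "nat \<Rightarrow> nat \<Rightarrow> (complex mat \<Rightarrow> complex mat) \<Rightarrow> (complex mat \<Rightarrow> complex mat) \<Rightarrow> real" where
  "chan_dist n m T T' = (\<Sum>a<n. \<Sum>b<n. \<Sum>i<m. \<Sum>j<m.
      cmod (T (mat_unit n a b) $$ (i, j) - T' (mat_unit n a b) $$ (i, j)))"

definition usc_on :: "'a set \<Rightarrow> ('a \<Rightarrow> 'a \<Rightarrow> real) \<Rightarrow> ('a \<Rightarrow> ereal) \<Rightarrow> bool" where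
  "usc_on S d f \<longleftrightarrow> (\<forall>x \<in> S. \<forall>c. f x < c \<longrightarrow> (\<exists>\<delta>>0. \<forall>y \<in> S. d x y < \<delta> \<longrightarrow> f y < c))"

definition Delta :: "nat \<Rightarrow> (complex mat \<Rightarrow> complex mat) \<Rightarrow> complex mat \<Rightarrow> (complex mat \<Rightarrow> complex mat)
     \<Rightarrow> complex mat \<Rightarrow> ereal" where
  "Delta n T \<sigma> N \<rho> = qrel_ent \<rho> \<sigma> - qrel_ent (N \<rho>) (N \<sigma>) - meas_rel_ent n \<rho> (T (N \<rho>))"

end

theory Submission
  imports Defs
begin


lemma mult_entry:
  fixes A B :: "'a::comm_ring_1 mat"
  assumes "A \<in> carrier_mat n k" "B \<in> carrier_mat k l" "i < n" "j < l"
  shows "(A * B) $$ (i, j) = (\<Sum>t<k. A $$ (i, t) * B $$ (t, j))"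
  using assms by (auto simp: scalar_prod_def lessThan_atLeast0 intro!: sum.cong)

lemma rdiag_carrier[simp]: "rdiag n d \<in> carrier_mat n n"
  by (simp add: rdiag_def)
lemma rdiag_dims[simp]: "dim_row (rdiag n d) = n" "dim_col (rdiag n d) = n"
  by (simp_all add: rdiag_def)

lemma cadj_carrier[simp]: "U \<in> carrier_mat n k \<Longrightarrow> cadj U \<in> carrier_mat k n"
  by (simp add: cadj_def)

lemma mult_rdiag_right:
  assumes "U \<in> carrier_mat n n" "i < n" "j < n"
  shows "(U * rdiag n d) $$ (i, j) = U $$ (i, j) * complex_of_real (d j)"
proof -
  have "(U * rdiag n d) $$ (i, j) = (\<Sum>t<n. U $$ (i, t) * rdiag n d $$ (t, j))"
    using assms by (intro mult_entry) auto
  also have "\<dots> = (\<Sum>t\<in>{j}. U $$ (i, t) * rdiag n d $$ (t, j))"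
    using assms by (intro sum.mono_neutral_right) (auto simp: rdiag_def)
  finally show ?thesis using assms by (simp add: rdiag_def)
qed

lemma mult_rdiag_left:
  assumes "U \<in> carrier_mat n n" "i < n" "j < n"
  shows "(rdiag n d * U) $$ (i, j) = complex_of_real (d i) * U $$ (i, j)"
proof -
  have "(rdiag n d * U) $$ (i, j) = (\<Sum>t<n. rdiag n d $$ (i, t) * U $$ (t, j))"
    using assms by (intro mult_entry) auto
  also have "\<dots> = (\<Sum>t\<in>{i}. rdiag n d $$ (i, t) * U $$ (t, j))"
    using assms by (intro sum.mono_neutral_right) (auto simp: rdiag_def)
  finally show ?thesis using assms by (simp add: rdiag_def)
qed

lemma cadj_one: "cadj (1\<^sub>m n) = (1\<^sub>m n :: complex mat)"
  by (rule eq_matI) (auto simp: cadj_def)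

lemma unitary_one: "unitary n (1\<^sub>m n)"
  by (simp add: unitary_def cadj_one)

lemma rdiag_fun_unique:
  assumes U: "unitary n U" and eq: "rdiag n e = U * rdiag n d * cadj U"
  shows "U * rdiag n (\<lambda>i. f (d i)) * cadj U = rdiag n (\<lambda>i. f (e i))"
proof -
  have Uc: "U \<in> carrier_mat n n" and UU: "cadj U * U = 1\<^sub>m n" and UU': "U * cadj U = 1\<^sub>m n"
    using U by (auto simp: unitary_def)
  have Ac: "cadj U \<in> carrier_mat n n" using Uc by simp
  have "rdiag n e * U = U * rdiag n d * cadj U * U" using eq by simp
  also have "\<dots> = U * rdiag n d * (cadj U * U)"
    using Uc Ac by (meson assoc_mult_mat mult_carrier_mat rdiag_carrier)
  also have "\<dots> = U * rdiag n d" using UU Uc by simp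
  finally have E: "rdiag n e * U = U * rdiag n d" .
  have F: "rdiag n (\<lambda>i. f (e i)) * U = U * rdiag n (\<lambda>i. f (d i))"
  proof (rule eq_matI)
    fix i j assume ij: "i < dim_row (U * rdiag n (\<lambda>i. f (d i)))" "j < dim_col (U * rdiag n (\<lambda>i. f (d i)))"
    hence i: "i < n" and j: "j < n" using Uc by auto
    have "complex_of_real (e i) * U $$ (i, j) = U $$ (i, j) * complex_of_real (d j)"
      using arg_cong[OF E, of "\<lambda>A. A $$ (i, j)"] mult_rdiag_left[OF Uc i j] mult_rdiag_right[OF Uc i j]
      by simp
    hence "U $$ (i, j) = 0 \<or> e i = d j" by (auto simp: mult.commute)
    thus "(rdiag n (\<lambda>i. f (e i)) * U) $$ (i, j) = (U * rdiag n (\<lambda>i. f (d i))) $$ (i, j)"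
      using mult_rdiag_left[OF Uc i j] mult_rdiag_right[OF Uc i j] by (auto simp: mult.commute)
  qed (use Uc in auto)
  have "U * rdiag n (\<lambda>i. f (d i)) * cadj U = rdiag n (\<lambda>i. f (e i)) * U * cadj U"
    using F by simp
  also have "\<dots> = rdiag n (\<lambda>i. f (e i)) * (U * cadj U)"
    using Uc Ac by (meson assoc_mult_mat rdiag_carrier)
  also have "\<dots> = rdiag n (\<lambda>i. f (e i))" using UU' by simp
  finally show ?thesis .
qed

definition Lg :: "real \<Rightarrow> real" where "Lg t = (if t > 0 then ln t else 0)"

lemma mat_log_rdiag: "mat_log (rdiag n e) = rdiag n (\<lambda>i. Lg (e i))"
proof -
  let ?P = "\<lambda>L. \<exists>U d. unitary n U \<and> rdiag n e = U * rdiag n d * cadj U \<and>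
       L = U * rdiag n (\<lambda>i. if d i > 0 then ln (d i) else 0) * cadj U"
  have ex: "?P (rdiag n (\<lambda>i. Lg (e i)))"
    by (rule exI[of _ "1\<^sub>m n"], rule exI[of _ e]) (simp add: unitary_one cadj_one Lg_def)
  have "?P (SOME L. ?P L)" using someI[of ?P, OF ex] .
  then obtain U d where U: "unitary n U" and eq: "rdiag n e = U * rdiag n d * cadj U"
    and L: "(SOME L. ?P L) = U * rdiag n (\<lambda>i. if d i > 0 then ln (d i) else 0) * cadj U" by blast
  have "(SOME L. ?P L) = rdiag n (\<lambda>i. Lg (e i))"
    unfolding L using rdiag_fun_unique[OF U eq, of Lg] by (simp add: Lg_def)
  thus ?thesis unfolding mat_log_def by simp
qed



lemma rdiag_mult_vec:
  assumes "v \<in> carrier_vec k" "i < k"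
  shows "(rdiag k p *\<^sub>v v) $ i = complex_of_real (p i) * v $ i"
proof -
  have "(rdiag k p *\<^sub>v v) $ i = (\<Sum>t<k. rdiag k p $$ (i, t) * v $ t)"
    using assms by (auto simp: scalar_prod_def lessThan_atLeast0 intro!: sum.cong)
  also have "\<dots> = (\<Sum>t\<in>{i}. rdiag k p $$ (i, t) * v $ t)"
    using assms by (intro sum.mono_neutral_right) (auto simp: rdiag_def)
  finally show ?thesis using assms by (simp add: rdiag_def)
qed

lemma supp_rdiag_subset:
  "supp (rdiag k p) \<subseteq> supp (rdiag k q) \<longleftrightarrow> (\<forall>x<k. p x \<noteq> 0 \<longrightarrow> q x \<noteq> 0)"
proof
  assume H: "supp (rdiag k p) \<subseteq> supp (rdiag k q)"
  show "\<forall>x<k. p x \<noteq> 0 \<longrightarrow> q x \<noteq> 0"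
  proof (intro allI impI, rule ccontr)
    fix x assume x: "x < k" "p x \<noteq> 0" "\<not> q x \<noteq> 0"
    have "rdiag k p *\<^sub>v unit_vec k x \<in> supp (rdiag k p)"
      unfolding supp_def by auto
    with H obtain w where w: "w \<in> carrier_vec k" "rdiag k p *\<^sub>v unit_vec k x = rdiag k q *\<^sub>v w"
      unfolding supp_def by auto
    have "(rdiag k p *\<^sub>v unit_vec k x) $ x = (rdiag k q *\<^sub>v w) $ x" using w by simp
    thus False using x w rdiag_mult_vec[OF w(1) x(1), of q] rdiag_mult_vec[of "unit_vec k x" k x p]
      by simp
  qed
next
  assume H: "\<forall>x<k. p x \<noteq> 0 \<longrightarrow> q x \<noteq> 0"
  show "supp (rdiag k p) \<subseteq> supp (rdiag k q)"
  proof
    fix y assume "y \<in> supp (rdiag k p)"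
    then obtain v where v: "v \<in> carrier_vec k" "y = rdiag k p *\<^sub>v v" unfolding supp_def by auto
    define w where "w = vec k (\<lambda>i. if q i = 0 then 0 else complex_of_real (p i / q i) * v $ i)"
    have wc: "w \<in> carrier_vec k" by (simp add: w_def)
    have "rdiag k q *\<^sub>v w = y"
    proof (rule eq_vecI)
      fix i assume "i < dim_vec y"
      hence i: "i < k" using v by simp
      show "(rdiag k q *\<^sub>v w) $ i = y $ i"
        unfolding v(2) rdiag_mult_vec[OF wc i] rdiag_mult_vec[OF v(1) i]
        using H i by (auto simp: w_def)
    qed (use v in simp)
    thus "y \<in> supp (rdiag k q)" unfolding supp_def using wc by auto
  qed
qed

lemma mtrace_rdiag_mult:
  assumes "C \<in> carrier_mat k k"
  shows "mtrace (rdiag k p * C) = (\<Sum>i<k. complex_of_real (p i) * C $$ (i, i))"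
  unfolding mtrace_def using assms mult_rdiag_left[OF assms] by (auto intro!: sum.cong)

definition gterm :: "real \<Rightarrow> real \<Rightarrow> ereal" where
  "gterm p q = (if p \<noteq> 0 \<and> q = 0 then \<infinity> else ereal (p * (Lg p - Lg q)))"

lemma qrel_ent_rdiag:
  "qrel_ent (rdiag k p) (rdiag k q) = (\<Sum>x<k. gterm (p x) (q x))"
proof (cases "\<forall>x<k. p x \<noteq> 0 \<longrightarrow> q x \<noteq> 0")
  case True
  have D: "rdiag k (\<lambda>i. Lg (p i)) - rdiag k (\<lambda>i. Lg (q i)) = rdiag k (\<lambda>i. Lg (p i) - Lg (q i))"
    by (rule eq_matI) (auto simp: rdiag_def)
  have "mtrace (rdiag k p * (rdiag k (\<lambda>i. Lg (p i) - Lg (q i)))) =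
      (\<Sum>i<k. complex_of_real (p i * (Lg (p i) - Lg (q i))))"
    by (subst mtrace_rdiag_mult) (auto simp: rdiag_def intro!: sum.cong)
  hence "Re (mtrace (rdiag k p * (rdiag k (\<lambda>i. Lg (p i)) - rdiag k (\<lambda>i. Lg (q i))))) =
      (\<Sum>i<k. p i * (Lg (p i) - Lg (q i)))" unfolding D by (simp add: Re_sum)
  moreover have "(\<Sum>x<k. gterm (p x) (q x)) = (\<Sum>x<k. ereal (p x * (Lg (p x) - Lg (q x))))"
    using True by (intro sum.cong) (auto simp: gterm_def)
  ultimately show ?thesis using True
    unfolding qrel_ent_def supp_rdiag_subset mat_log_rdiag by simp
next
  case False
  then obtain x where x: "x < k" "p x \<noteq> 0" "q x = 0" by auto
  have "(\<Sum>x<k. gterm (p x) (q x)) = \<infinity>"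
    unfolding sum_Pinfty using x by (auto simp: gterm_def)
  thus ?thesis using False unfolding qrel_ent_def supp_rdiag_subset by auto
qed



definition herm :: "nat \<Rightarrow> (nat \<Rightarrow> nat \<Rightarrow> complex) \<Rightarrow> bool" where
  "herm n B \<longleftrightarrow> (\<forall>i<n. \<forall>j<n. B i j = cnj (B j i))"
definition qf :: "nat \<Rightarrow> (nat \<Rightarrow> nat \<Rightarrow> complex) \<Rightarrow> (nat \<Rightarrow> complex) \<Rightarrow> complex" where
  "qf n B v = (\<Sum>i<n. \<Sum>j<n. cnj (v i) * B i j * v j)"
definition psdf :: "nat \<Rightarrow> (nat \<Rightarrow> nat \<Rightarrow> complex) \<Rightarrow> bool" where
  "psdf n B \<longleftrightarrow> herm n B \<and> (\<forall>v. 0 \<le> Re (qf n B v))"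

lemma psdf_herm: "psdf n B \<Longrightarrow> i < n \<Longrightarrow> j < n \<Longrightarrow> B i j = cnj (B j i)"
  unfolding psdf_def herm_def by blast
lemma psdf_qf: "psdf n B \<Longrightarrow> 0 \<le> Re (qf n B v)"
  unfolding psdf_def by blast

lemma qf_two:
  assumes "s < n" "j < n" "s \<noteq> j"
  shows "qf n B (\<lambda>i. if i = s then x else if i = j then y else 0) =
    cnj x * B s s * x + cnj x * B s j * y + cnj y * B j s * x + cnj y * B j j * y"
proof -
  let ?v = "\<lambda>i. if i = s then x else if i = j then y else 0"
  have inner: "\<And>i. (\<Sum>l<n. cnj (?v i) * B i l * ?v l) = cnj (?v i) * B i s * x + cnj (?v i) * B i j * y"
  proof -
    fix i
    have "(\<Sum>l<n. cnj (?v i) * B i l * ?v l) = (\<Sum>l\<in>{s,j}. cnj (?v i) * B i l * ?v l)"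
      using assms by (intro sum.mono_neutral_right) auto
    thus "?thesis i" using assms by simp
  qed
  have "qf n B ?v = (\<Sum>i<n. cnj (?v i) * B i s * x + cnj (?v i) * B i j * y)"
    unfolding qf_def using inner by simp
  also have "\<dots> = (\<Sum>i\<in>{s,j}. cnj (?v i) * B i s * x + cnj (?v i) * B i j * y)"
    using assms by (intro sum.mono_neutral_right) auto
  finally show ?thesis using assms by (simp add: add.assoc)
qed

lemma psdf_diag:
  assumes "psdf n B" "s < n"
  shows "B s s = complex_of_real (Re (B s s))" "0 \<le> Re (B s s)"
proof -
  have "B s s = cnj (B s s)" using psdf_herm[OF assms(1,2,2)] .
  thus "B s s = complex_of_real (Re (B s s))" by (metis Reals_cnj_iff of_real_Re)
  have "qf n B (\<lambda>i. if i = s then 1 else 0) = B s s"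
  proof -
    have "\<And>i. (\<Sum>j<n. cnj (if i = s then 1 else 0) * B i j * (if j = s then 1 else 0)) = (if i = s then B s s else 0)"
      using assms(2) by (simp add: if_distrib cong: if_cong)
    thus ?thesis unfolding qf_def using assms(2) by simp
  qed
  thus "0 \<le> Re (B s s)" using psdf_qf[OF assms(1)] by metis
qed

lemma psdf_zero_row:
  assumes P: "psdf n B" and s: "s < n" and z: "B s s = 0" and j: "j < n"
  shows "B s j = 0"
proof (rule ccontr)
  assume c: "B s j \<noteq> 0"
  hence sj: "s \<noteq> j" using z by auto
  have H: "B j s = cnj (B s j)" using psdf_herm[OF P j s] .
  define c2 where "c2 = (cmod (B s j))^2"
  have c2pos: "c2 > 0" using c by (simp add: c2_def)
  have cc: "B s j * cnj (B s j) = complex_of_real c2"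
    unfolding c2_def by (metis complex_norm_square)
  define t where "t = (\<bar>Re (B j j)\<bar> + 1) / (2 * c2)"
  have tpos: "t > 0" using c2pos by (simp add: t_def)
  have "0 \<le> Re (qf n B (\<lambda>i. if i = s then - complex_of_real t * B s j else if i = j then 1 else 0))"
    using psdf_qf[OF P] .
  also have "qf n B (\<lambda>i. if i = s then - complex_of_real t * B s j else if i = j then 1 else 0)
     = B j j - 2 * complex_of_real t * complex_of_real c2"
  proof -
    have e: "cnj (B s j) * B s j = complex_of_real c2" using cc by (simp add: mult.commute)
    have "qf n B (\<lambda>i. if i = s then - complex_of_real t * B s j else if i = j then 1 else 0)
      = B j j - 2 * complex_of_real t * (cnj (B s j) * B s j)"
      unfolding qf_two[OF s j sj] z H by (simp add: algebra_simps)
    thus ?thesis unfolding e .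
  qed
  finally have "0 \<le> Re (B j j) - 2 * t * c2" by simp
  moreover have "2 * t * c2 = \<bar>Re (B j j)\<bar> + 1" using c2pos by (simp add: t_def)
  ultimately show False by linarith
qed



definition sf :: "nat \<Rightarrow> (nat \<Rightarrow> nat \<Rightarrow> complex) \<Rightarrow> (nat \<Rightarrow> complex) \<Rightarrow> (nat \<Rightarrow> complex) \<Rightarrow> complex" where
  "sf n B u v = (\<Sum>i<n. \<Sum>j<n. cnj (u i) * B i j * v j)"

lemma qf_sf: "qf n B v = sf n B v v" by (simp add: qf_def sf_def)

lemma sf_diff_left: "sf n B (\<lambda>i. u i - u' i) v = sf n B u v - sf n B u' v"
  by (simp add: sf_def ring_distribs sum_subtractf)
lemma sf_diff_right: "sf n B u (\<lambda>i. v i - v' i) = sf n B u v - sf n B u v'"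
  by (simp add: sf_def ring_distribs sum_subtractf)

lemma sum_delta_lt:
  fixes n :: nat
  assumes "s < n"
  shows "(\<Sum>j<n. f j * (if j = s then c else 0)) = f s * (c::complex)"
proof -
  have "(\<Sum>j<n. f j * (if j = s then c else 0)) = (\<Sum>j<n. if j = s then f s * c else 0)"
    by (intro sum.cong) auto
  thus ?thesis using assms by (subst (asm) sum.delta) auto
qed

lemma sf_delta_right:
  assumes "s < n"
  shows "sf n B u (\<lambda>j. if j = s then c else 0) = (\<Sum>i<n. cnj (u i) * B i s) * c"
  unfolding sf_def using sum_delta_lt[OF assms, of "\<lambda>j. cnj (u _) * B _ j"]
  by (simp add: sum_distrib_right)

lemma sf_delta_left:
  assumes "s < n"
  shows "sf n B (\<lambda>j. if j = s then c else 0) v = cnj c * (\<Sum>j<n. B s j * v j)"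
proof -
  have "sf n B (\<lambda>j. if j = s then c else 0) v = (\<Sum>i<n. (\<Sum>j<n. B i j * v j) * (if i = s then cnj c else 0))"
    unfolding sf_def by (intro sum.cong) (auto simp: sum_distrib_left sum_distrib_right algebra_simps)
  also have "\<dots> = (\<Sum>j<n. B s j * v j) * cnj c" by (rule sum_delta_lt[OF assms])
  finally show ?thesis by (simp add: mult.commute)
qed

lemma psdf_schur:
  assumes P: "psdf n B" and s: "s < n" and b: "B s s \<noteq> 0"
  shows "psdf n (\<lambda>i j. B i j - B i s * B s j / B s s)"
proof -
  let ?b = "B s s"
  have bc: "cnj ?b = ?b" using psdf_herm[OF P s s] by simp
  have herm: "herm n (\<lambda>i j. B i j - B i s * B s j / B s s)"
    unfolding herm_def
  proof (intro allI impI)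
    fix i j assume i: "i < n" and j: "j < n"
    show "B i j - B i s * B s j / ?b = cnj (B j i - B j s * B s i / ?b)"
      using psdf_herm[OF P i j] psdf_herm[OF P i s] psdf_herm[OF P s j] bc
      by (simp add: mult.commute)
  qed
  have "0 \<le> Re (qf n (\<lambda>i j. B i j - B i s * B s j / B s s) v)" for v
  proof -
    define y where "y = (\<Sum>j<n. B s j * v j)"
    have y2: "(\<Sum>i<n. cnj (v i) * B i s) = cnj y"
      unfolding y_def by (auto simp: psdf_herm[OF P _ s] intro!: sum.cong)
    define c where "c = y / ?b"
    define w where "w = (\<lambda>i. v i - (if i = s then c else 0))"
    have "qf n B w = sf n B v v - sf n B v (\<lambda>j. if j = s then c else 0)
        - (sf n B (\<lambda>j. if j = s then c else 0) v - sf n B (\<lambda>j. if j = s then c else 0) (\<lambda>j. if j = s then c else 0))"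
      unfolding qf_sf w_def sf_diff_left sf_diff_right by simp
    also have "\<dots> = sf n B v v - cnj y * c - (cnj c * y - cnj c * (B s s * c))"
      unfolding sf_delta_left[OF s] unfolding sf_delta_right[OF s] y2 y_def
      using sum_delta_lt[OF s, of "B s" c] by simp
    also have "\<dots> = sf n B v v - cnj y * y / ?b"
      unfolding c_def using b bc by (simp add: field_simps)
    finally have Q: "qf n B w = sf n B v v - cnj y * y / ?b" .
    have "qf n (\<lambda>i j. B i j - B i s * B s j / B s s) v =
        sf n B v v - (\<Sum>i<n. \<Sum>j<n. (cnj (v i) * B i s) * (B s j * v j)) / ?b"
      unfolding qf_def sf_def by (simp add: ring_distribs sum_subtractf sum_divide_distrib algebra_simps)
    also have "\<dots> = sf n B v v - cnj y * y / ?b"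
      unfolding sum_product[symmetric] y2 y_def ..
    finally show ?thesis using Q psdf_qf[OF P, of w] by simp
  qed
  thus ?thesis using herm unfolding psdf_def by blast
qed



definition trf :: "nat \<Rightarrow> (nat \<Rightarrow> nat \<Rightarrow> complex) \<Rightarrow> (nat \<Rightarrow> nat \<Rightarrow> complex) \<Rightarrow> complex" where
  "trf n A B = (\<Sum>i<n. \<Sum>j<n. A i j * B j i)"

lemma trf_cong:
  assumes "\<And>i j. i < n \<Longrightarrow> j < n \<Longrightarrow> B j i = B' j i"
  shows "trf n A B = trf n A B'"
  unfolding trf_def using assms by (auto intro!: sum.cong)

lemma trf_split:
  assumes P: "psdf n B" and s: "s < n"
  shows "trf n A B = trf n A (\<lambda>i j. B i j - B i s * B s j / B s s) +
     qf n A (\<lambda>j. B j s) / B s s"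
proof -
  have "trf n A B = trf n A (\<lambda>i j. B i j - B i s * B s j / B s s) +
     (\<Sum>i<n. \<Sum>j<n. A i j * (B j s * B s i / B s s))"
    unfolding trf_def by (simp add: ring_distribs sum_subtractf sum.distrib[symmetric])
  also have "(\<Sum>i<n. \<Sum>j<n. A i j * (B j s * B s i / B s s)) = qf n A (\<lambda>j. B j s) / B s s"
    unfolding qf_def sum_divide_distrib
  proof (intro sum.cong refl)
    fix i j assume i: "i \<in> {..<n}" and j: "j \<in> {..<n}"
    have "B s i = cnj (B i s)" using psdf_herm[OF P s] i by auto
    thus "A i j * (B j s * B s i / B s s) = cnj (B i s) * A i j * B j s / B s s" by simp
  qed
  finally show ?thesis .
qed

lemma trf_nonneg_aux:
  assumes A: "psdf n A" and fin: "finite S"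
  shows "S \<subseteq> {..<n} \<Longrightarrow> psdf n B \<Longrightarrow> (\<forall>i<n. \<forall>j<n. (i \<notin> S \<or> j \<notin> S) \<longrightarrow> B i j = 0)
    \<Longrightarrow> 0 \<le> Re (trf n A B)"
  using fin
proof (induction S arbitrary: B rule: finite_induct)
  case empty
  hence "trf n A B = 0" unfolding trf_def by simp
  thus ?case by simp
next
  case (insert s S B)
  have s: "s < n" using insert by auto
  show ?case
  proof (cases "B s s = 0")
    case True
    have row: "B s j = 0" if "j < n" for j using psdf_zero_row[OF insert(5) s True that] .
    have col: "B j s = 0" if "j < n" for j using psdf_herm[OF insert(5) that s] row[OF that] by simp
    show ?thesis
    proof (rule insert.IH)
      show "\<forall>i<n. \<forall>j<n. (i \<notin> S \<or> j \<notin> S) \<longrightarrow> B i j = 0"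
        using insert(6) row col by auto
    qed (use insert in auto)
  next
    case False
    let ?B' = "\<lambda>i j. B i j - B i s * B s j / B s s"
    have "0 \<le> Re (trf n A ?B')"
    proof (rule insert.IH)
      show "psdf n ?B'" by (rule psdf_schur[OF insert(5) s False])
      show "\<forall>i<n. \<forall>j<n. (i \<notin> S \<or> j \<notin> S) \<longrightarrow> ?B' i j = 0"
      proof (intro allI impI)
        fix i j assume ij: "i < n" "j < n" "i \<notin> S \<or> j \<notin> S"
        show "?B' i j = 0"
        proof (cases "i = s \<or> j = s")
          case True thus ?thesis using False by auto
        next
          case F2: False
          hence "i \<notin> insert s S \<or> j \<notin> insert s S" using ij by auto
          hence "B i j = 0" "B i s = 0 \<or> B s j = 0" using insert(6) ij s by auto
          thus ?thesis by auto
        qed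
      qed
    qed (use insert in auto)
    moreover have "0 \<le> Re (qf n A (\<lambda>j. B j s) / B s s)"
    proof -
      have b: "B s s = complex_of_real (Re (B s s))" "0 \<le> Re (B s s)" using psdf_diag[OF insert(5) s] by auto
      have "Re (qf n A (\<lambda>j. B j s) / B s s) = Re (qf n A (\<lambda>j. B j s)) / Re (B s s)"
        by (subst b(1)) (simp add: Re_divide_of_real)
      thus ?thesis using psdf_qf[OF A] b(2) by simp
    qed
    ultimately show ?thesis unfolding trf_split[OF insert(5) s] by simp
  qed
qed

lemma trf_nonneg:
  assumes "psdf n A" "psdf n B"
  shows "0 \<le> Re (trf n A B)"
  by (rule trf_nonneg_aux[OF assms(1) _ _ assms(2), of "{..<n}"]) auto

lemma trf_real:
  assumes "herm n A" "herm n B"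
  shows "Im (trf n A B) = 0"
proof -
  have "cnj (trf n A B) = (\<Sum>i<n. \<Sum>j<n. A j i * B i j)"
    unfolding trf_def cnj_sum
  proof (intro sum.cong refl)
    fix i j assume i: "i \<in> {..<n}" and j: "j \<in> {..<n}"
    have "A i j = cnj (A j i)" "B j i = cnj (B i j)" using assms i j unfolding herm_def by blast+
    thus "cnj (A i j * B j i) = A j i * B i j" by simp
  qed
  also have "\<dots> = trf n A B" unfolding trf_def
    by (subst sum.swap) (simp add: mult.commute)
  finally show ?thesis by (metis Reals_cnj_iff complex_is_Real_iff)
qed



lemma psd_carrier: "psd n A \<Longrightarrow> A \<in> carrier_mat n n"
  by (simp add: psd_def hermitian_def)

lemma psd_psdf:
  assumes "psd n A"
  shows "psdf n (\<lambda>i j. A $$ (i, j))"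
proof -
  have Ac: "A \<in> carrier_mat n n" and H: "cadj A = A" using assms by (auto simp: psd_def hermitian_def)
  have herm: "herm n (\<lambda>i j. A $$ (i, j))"
    unfolding herm_def
  proof (intro allI impI)
    fix i j assume "i < n" "j < n"
    thus "A $$ (i, j) = cnj (A $$ (j, i))"
      using arg_cong[OF H, of "\<lambda>B. B $$ (i, j)"] Ac by (simp add: cadj_def)
  qed
  have "0 \<le> Re (qf n (\<lambda>i j. A $$ (i, j)) v)" for v
  proof -
    have vc: "vec n v \<in> carrier_vec n" by simp
    have "cinner (vec n v) (A *\<^sub>v vec n v) = qf n (\<lambda>i j. A $$ (i, j)) v"
      unfolding cinner_def qf_def using Ac
      by (auto simp: scalar_prod_def lessThan_atLeast0 sum_distrib_left mult.assoc intro!: sum.cong)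
    thus ?thesis using assms vc unfolding psd_def by metis
  qed
  thus ?thesis using herm by (simp add: psdf_def)
qed

lemma mtrace_mult_trf:
  assumes "A \<in> carrier_mat n n" "B \<in> carrier_mat n n"
  shows "mtrace (A * B) = trf n (\<lambda>i j. A $$ (i, j)) (\<lambda>i j. B $$ (i, j))"
proof -
  have "mtrace (A * B) = (\<Sum>i<n. (A * B) $$ (i, i))" unfolding mtrace_def using assms by simp
  also have "\<dots> = (\<Sum>i<n. \<Sum>j<n. A $$ (i, j) * B $$ (j, i))"
    by (intro sum.cong refl) (use mult_entry[OF assms] in auto)
  finally show ?thesis unfolding trf_def .
qed

lemma mtrace_psd:
  assumes "psd n A" "psd n B"
  shows "Im (mtrace (A * B)) = 0" "0 \<le> Re (mtrace (A * B))"
  using mtrace_mult_trf[OF psd_carrier[OF assms(1)] psd_carrier[OF assms(2)]]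
    trf_real[of n "\<lambda>i j. A $$ (i, j)" "\<lambda>i j. B $$ (i, j)"]
    trf_nonneg[OF psd_psdf[OF assms(1)] psd_psdf[OF assms(2)]]
    psd_psdf[OF assms(1)] psd_psdf[OF assms(2)]
  by (auto simp: psdf_def)

lemma meas_rdiag:
  assumes "psd n \<omega>" "povm n k M"
  shows "meas k M \<omega> = rdiag k (\<lambda>x. Re (mtrace (\<omega> * M x)))"
proof (rule eq_matI)
  fix i j assume "i < dim_row (rdiag k (\<lambda>x. Re (mtrace (\<omega> * M x))))"
    "j < dim_col (rdiag k (\<lambda>x. Re (mtrace (\<omega> * M x))))"
  hence ij: "i < k" "j < k" by auto
  have "psd n (M i)" using assms(2) ij by (simp add: povm_def)
  hence "Im (mtrace (\<omega> * M i)) = 0" using mtrace_psd(1)[OF assms(1)] by blast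
  hence "complex_of_real (Re (mtrace (\<omega> * M i))) = mtrace (\<omega> * M i)"
    by (simp add: complex_eq_iff)
  thus "meas k M \<omega> $$ (i, j) = rdiag k (\<lambda>x. Re (mtrace (\<omega> * M x))) $$ (i, j)"
    using ij by (cases "i = j") (auto simp: meas_def rdiag_def)
qed (auto simp: meas_def)

lemma qrel_ent_meas:
  assumes "psd n \<rho>" "psd n \<tau>" "povm n k M"
  shows "qrel_ent (meas k M \<rho>) (meas k M \<tau>) =
     (\<Sum>x<k. gterm (Re (mtrace (\<rho> * M x))) (Re (mtrace (\<tau> * M x))))"
  unfolding meas_rdiag[OF assms(1,3)] meas_rdiag[OF assms(2,3)] qrel_ent_rdiag ..



lemma channel_carrier: "channel n m N \<Longrightarrow> X \<in> carrier_mat n n \<Longrightarrow> N X \<in> carrier_mat m m"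
  unfolding channel_def by blast
lemma channel_add: "channel n m N \<Longrightarrow> X \<in> carrier_mat n n \<Longrightarrow> Y \<in> carrier_mat n n \<Longrightarrow> N (X + Y) = N X + N Y"
  unfolding channel_def by blast
lemma channel_smult: "channel n m N \<Longrightarrow> X \<in> carrier_mat n n \<Longrightarrow> N (c \<cdot>\<^sub>m X) = c \<cdot>\<^sub>m N X"
  unfolding channel_def by blast

lemma blockapply_1:
  assumes "channel n m N" "X \<in> carrier_mat n n"
  shows "blockapply 1 n m N X = N X"
proof -
  have NX: "N X \<in> carrier_mat m m" using channel_carrier assms by blast
  have X: "mat n n (\<lambda>(a, b). X $$ (a, b)) = X"
    by (rule eq_matI) (use assms in auto)
  show ?thesis
    by (rule eq_matI) (use NX X in \<open>auto simp: blockapply_def\<close>)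
qed

lemma channel_psd:
  assumes "channel n m N" "psd n X"
  shows "psd m (N X)"
proof -
  have "psd (1 * m) (blockapply 1 n m N X)"
    using assms unfolding channel_def by (metis mult_1)
  thus ?thesis using blockapply_1[OF assms(1) psd_carrier[OF assms(2)]] by simp
qed

definition restr :: "nat \<Rightarrow> (nat \<times> nat) set \<Rightarrow> complex mat \<Rightarrow> complex mat" where
  "restr m S Y = mat m m (\<lambda>(a, b). if (a, b) \<in> S then Y $$ (a, b) else 0)"

lemma channel_expand_aux:
  assumes T: "channel m n T" and i: "i < n" and j: "j < n" and fin: "finite S"
  shows "T (restr m S Y) $$ (i, j) = (\<Sum>(a, b)\<in>S. Y $$ (a, b) * T (mat_unit m a b) $$ (i, j))"
  using fin
proof (induction S rule: finite_induct)
  case empty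
  have z: "restr m {} Y = 0 \<cdot>\<^sub>m 0\<^sub>m m m" by (rule eq_matI) (auto simp: restr_def)
  have "T (restr m {} Y) = 0 \<cdot>\<^sub>m T (0\<^sub>m m m)" unfolding z by (rule channel_smult[OF T]) simp
  moreover have "T (0\<^sub>m m m) \<in> carrier_mat n n" using channel_carrier[OF T] by simp
  ultimately show ?case using i j by simp
next
  case (insert x S)
  obtain a b where x: "x = (a, b)" by (cases x)
  have eq: "restr m (insert x S) Y = (Y $$ (a, b)) \<cdot>\<^sub>m mat_unit m a b + restr m S Y"
    by (rule eq_matI) (use insert(2) in \<open>auto simp: restr_def mat_unit_def x\<close>)
  have c1: "mat_unit m a b \<in> carrier_mat m m" by (simp add: mat_unit_def)
  have c2: "restr m S Y \<in> carrier_mat m m" by (simp add: restr_def)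
  have "T (restr m (insert x S) Y) = (Y $$ (a, b)) \<cdot>\<^sub>m T (mat_unit m a b) + T (restr m S Y)"
    unfolding eq using channel_add[OF T _ c2] channel_smult[OF T c1] c1 by simp
  moreover have "T (mat_unit m a b) \<in> carrier_mat n n" "T (restr m S Y) \<in> carrier_mat n n"
    using channel_carrier[OF T] c1 c2 by auto
  ultimately show ?case using insert i j x by simp
qed

lemma channel_expand:
  assumes T: "channel m n T" and i: "i < n" and j: "j < n" and Y: "Y \<in> carrier_mat m m"
  shows "T Y $$ (i, j) = (\<Sum>a<m. \<Sum>b<m. Y $$ (a, b) * T (mat_unit m a b) $$ (i, j))"
proof -
  have "restr m ({..<m} \<times> {..<m}) Y = Y" by (rule eq_matI) (use Y in \<open>auto simp: restr_def\<close>)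
  hence "T Y $$ (i, j) = (\<Sum>(a, b)\<in>{..<m} \<times> {..<m}. Y $$ (a, b) * T (mat_unit m a b) $$ (i, j))"
    using channel_expand_aux[OF T i j, of "{..<m} \<times> {..<m}" Y] by simp
  thus ?thesis by (simp add: sum.cartesian_product)
qed

lemma chan_dist_nonneg: "0 \<le> chan_dist m n T T'"
  unfolding chan_dist_def by (intro sum_nonneg) auto

lemma chan_dist_entry:
  assumes "a < m" "b < m" "i < n" "j < n"
  shows "cmod (T (mat_unit m a b) $$ (i, j) - T' (mat_unit m a b) $$ (i, j)) \<le> chan_dist m n T T'"
proof -
  let ?f = "\<lambda>a b i j. cmod (T (mat_unit m a b) $$ (i, j) - T' (mat_unit m a b) $$ (i, j))"
  have "?f a b i j \<le> (\<Sum>j<n. ?f a b i j)" using assms by (intro member_le_sum) auto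
  also have "\<dots> \<le> (\<Sum>i<n. \<Sum>j<n. ?f a b i j)" using assms
    by (intro member_le_sum[of _ _ "\<lambda>i. \<Sum>j<n. ?f a b i j"]) (auto intro!: sum_nonneg)
  also have "\<dots> \<le> (\<Sum>b<m. \<Sum>i<n. \<Sum>j<n. ?f a b i j)" using assms
    by (intro member_le_sum[of _ _ "\<lambda>b. \<Sum>i<n. \<Sum>j<n. ?f a b i j"]) (auto intro!: sum_nonneg)
  also have "\<dots> \<le> (\<Sum>a<m. \<Sum>b<m. \<Sum>i<n. \<Sum>j<n. ?f a b i j)" using assms
    by (intro member_le_sum[of _ _ "\<lambda>a. \<Sum>b<m. \<Sum>i<n. \<Sum>j<n. ?f a b i j"]) (auto intro!: sum_nonneg)
  finally show ?thesis unfolding chan_dist_def .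
qed

lemma channel_entry_bound:
  assumes T: "channel m n T" and T0: "channel m n T0" and i: "i < n" and j: "j < n"
    and Y: "Y \<in> carrier_mat m m"
  shows "cmod (T Y $$ (i, j) - T0 Y $$ (i, j)) \<le> (\<Sum>a<m. \<Sum>b<m. cmod (Y $$ (a, b))) * chan_dist m n T0 T"
proof -
  have "T Y $$ (i, j) - T0 Y $$ (i, j) =
      (\<Sum>a<m. \<Sum>b<m. Y $$ (a, b) * (T (mat_unit m a b) $$ (i, j) - T0 (mat_unit m a b) $$ (i, j)))"
    unfolding channel_expand[OF T i j Y] channel_expand[OF T0 i j Y]
    by (simp add: sum_subtractf[symmetric] algebra_simps)
  also have "cmod \<dots> \<le> (\<Sum>a<m. \<Sum>b<m. cmod (Y $$ (a, b)) * chan_dist m n T0 T)"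
  proof -
    have "cmod (\<Sum>a<m. \<Sum>b<m. Y $$ (a, b) * (T (mat_unit m a b) $$ (i, j) - T0 (mat_unit m a b) $$ (i, j)))
      \<le> (\<Sum>a<m. \<Sum>b<m. cmod (Y $$ (a, b) * (T (mat_unit m a b) $$ (i, j) - T0 (mat_unit m a b) $$ (i, j))))"
      by (rule order_trans[OF norm_sum sum_mono]) (rule norm_sum)
    also have "\<dots> \<le> (\<Sum>a<m. \<Sum>b<m. cmod (Y $$ (a, b)) * chan_dist m n T0 T)"
    proof (intro sum_mono)
      fix a b assume "a \<in> {..<m}" "b \<in> {..<m}"
      hence "cmod (T (mat_unit m a b) $$ (i, j) - T0 (mat_unit m a b) $$ (i, j)) \<le> chan_dist m n T0 T"
        using chan_dist_entry[of a m b i n j T0 T] i j by (simp add: norm_minus_commute)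
      thus "cmod (Y $$ (a, b) * (T (mat_unit m a b) $$ (i, j) - T0 (mat_unit m a b) $$ (i, j)))
          \<le> cmod (Y $$ (a, b)) * chan_dist m n T0 T"
        by (simp add: norm_mult mult_left_mono)
    qed
    finally show ?thesis .
  qed
  finally show ?thesis by (simp add: sum_distrib_right)
qed



lemma trace_bound:
  assumes T: "channel m n T" and T0: "channel m n T0" and Y: "Y \<in> carrier_mat m m"
    and M: "M \<in> carrier_mat n n"
  shows "\<bar>Re (mtrace (T Y * M)) - Re (mtrace (T0 Y * M))\<bar> \<le>
    (\<Sum>i<n. \<Sum>j<n. cmod (M $$ (j, i))) * ((\<Sum>a<m. \<Sum>b<m. cmod (Y $$ (a, b))) * chan_dist m n T0 T)"
proof -
  let ?K = "(\<Sum>a<m. \<Sum>b<m. cmod (Y $$ (a, b))) * chan_dist m n T0 T"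
  have c: "T Y \<in> carrier_mat n n" "T0 Y \<in> carrier_mat n n" using channel_carrier T T0 Y by blast+
  have "mtrace (T Y * M) - mtrace (T0 Y * M) = (\<Sum>i<n. \<Sum>j<n. (T Y $$ (i, j) - T0 Y $$ (i, j)) * M $$ (j, i))"
    unfolding mtrace_mult_trf[OF c(1) M] mtrace_mult_trf[OF c(2) M] trf_def
    by (simp add: sum_subtractf[symmetric] algebra_simps)
  hence "\<bar>Re (mtrace (T Y * M)) - Re (mtrace (T0 Y * M))\<bar> \<le> cmod (\<Sum>i<n. \<Sum>j<n. (T Y $$ (i, j) - T0 Y $$ (i, j)) * M $$ (j, i))"
    by (metis abs_Re_le_cmod minus_complex.sel(1))
  also have "\<dots> \<le> (\<Sum>i<n. \<Sum>j<n. cmod ((T Y $$ (i, j) - T0 Y $$ (i, j)) * M $$ (j, i)))"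
    by (rule order_trans[OF norm_sum sum_mono]) (rule norm_sum)
  also have "\<dots> \<le> (\<Sum>i<n. \<Sum>j<n. cmod (M $$ (j, i)) * ?K)"
  proof (intro sum_mono)
    fix i j assume "i \<in> {..<n}" "j \<in> {..<n}"
    hence "cmod (T Y $$ (i, j) - T0 Y $$ (i, j)) \<le> ?K" using channel_entry_bound[OF T T0 _ _ Y] by auto
    thus "cmod ((T Y $$ (i, j) - T0 Y $$ (i, j)) * M $$ (j, i)) \<le> cmod (M $$ (j, i)) * ?K"
      by (simp add: norm_mult mult.commute mult_left_mono)
  qed
  finally show ?thesis by (simp add: sum_distrib_right)
qed

definition chF :: "nat \<Rightarrow> nat \<Rightarrow> (complex mat \<Rightarrow> complex mat) \<Rightarrow> (complex mat \<Rightarrow> complex mat) filter" where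
  "chF m n T0 = (INF d\<in>{0<..}. principal {T. channel m n T \<and> chan_dist m n T0 T < d})"

lemma eventually_chF:
  "eventually P (chF m n T0) \<longleftrightarrow> (\<exists>d>0. \<forall>T. channel m n T \<and> chan_dist m n T0 T < d \<longrightarrow> P T)"
proof -
  have ne: "{0::real<..} \<noteq> {}" by auto
  have dir: "a \<in> {0::real<..} \<Longrightarrow> b \<in> {0<..} \<Longrightarrow> \<exists>x\<in>{0<..}. principal {T. channel m n T \<and> chan_dist m n T0 T < x}
     \<le> inf (principal {T. channel m n T \<and> chan_dist m n T0 T < a}) (principal {T. channel m n T \<and> chan_dist m n T0 T < b})"
    for a b :: real
    by (intro bexI[of _ "min a b"]) auto
  show ?thesis unfolding chF_def using eventually_INF_base[OF ne dir, of P] by (auto simp: eventually_principal)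
qed

lemma tendsto_trace:
  assumes T0: "channel m n T0" and Y: "Y \<in> carrier_mat m m" and M: "M \<in> carrier_mat n n"
  shows "((\<lambda>T. Re (mtrace (T Y * M))) \<longlongrightarrow> Re (mtrace (T0 Y * M))) (chF m n T0)"
proof (rule tendstoI)
  fix e :: real assume e: "e > 0"
  define K where "K = (\<Sum>i<n. \<Sum>j<n. cmod (M $$ (j, i))) * (\<Sum>a<m. \<Sum>b<m. cmod (Y $$ (a, b)))"
  have K: "K \<ge> 0" unfolding K_def by (intro mult_nonneg_nonneg sum_nonneg) auto
  show "eventually (\<lambda>T. dist (Re (mtrace (T Y * M))) (Re (mtrace (T0 Y * M))) < e) (chF m n T0)"
    unfolding eventually_chF
  proof (intro exI[of _ "e / (K + 1)"] conjI allI impI)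
    show "e / (K + 1) > 0" using e K by simp
    fix T assume H: "channel m n T \<and> chan_dist m n T0 T < e / (K + 1)"
    have "dist (Re (mtrace (T Y * M))) (Re (mtrace (T0 Y * M))) \<le> K * chan_dist m n T0 T"
      using trace_bound[OF _ T0 Y M, of T] H unfolding dist_real_def K_def by (simp add: mult.assoc)
    also have "\<dots> \<le> K * (e / (K + 1))" using H K by (intro mult_left_mono) auto
    also have "\<dots> < e" using K e by (simp add: field_simps)
    finally show "dist (Re (mtrace (T Y * M))) (Re (mtrace (T0 Y * M))) < e" .
  qed
qed



definition lscF :: "'a filter \<Rightarrow> ('a \<Rightarrow> ereal) \<Rightarrow> ereal \<Rightarrow> bool" where
  "lscF F f v \<longleftrightarrow> (\<forall>s. s < v \<longrightarrow> eventually (\<lambda>T. s < f T) F)"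

lemma gterm_ge: "ereal (p * (Lg p - Lg q)) \<le> gterm p q"
  by (simp add: gterm_def)
lemma gterm_not_minf: "gterm p q \<noteq> -\<infinity>"
  by (simp add: gterm_def)

lemma lsc_gterm:
  assumes p: "0 \<le> p" and q0: "0 \<le> q0" and lim: "(q \<longlongrightarrow> q0) F" and ev: "eventually (\<lambda>T. 0 \<le> q T) F"
  shows "lscF F (\<lambda>T. gterm p (q T)) (gterm p q0)"
  unfolding lscF_def
proof (intro allI impI)
  fix s assume s: "s < gterm p q0"
  show "eventually (\<lambda>T. s < gterm p (q T)) F"
  proof (cases "p = 0")
    case True
    thus ?thesis using s by (simp add: gterm_def)
  next
    case pn: False
    hence pp: "p > 0" using p by simp
    show ?thesis
    proof (cases "q0 = 0")
      case False
      hence qp: "q0 > 0" using q0 by simp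
      have evp: "eventually (\<lambda>T. 0 < q T) F" using order_tendstoD(1)[OF lim qp] .
      have "((\<lambda>T. ln (q T)) \<longlongrightarrow> ln q0) F" using tendsto_ln[OF lim] qp by simp
      hence "((\<lambda>T. Lg (q T)) \<longlongrightarrow> ln q0) F"
        by (rule Lim_transform_eventually) (use evp in \<open>auto elim!: eventually_mono simp: Lg_def\<close>)
      hence "((\<lambda>T. p * (Lg p - Lg (q T))) \<longlongrightarrow> p * (Lg p - ln q0)) F"
        by (intro tendsto_intros)
      hence L: "((\<lambda>T. ereal (p * (Lg p - Lg (q T)))) \<longlongrightarrow> ereal (p * (Lg p - ln q0))) F"
        by (rule tendsto_ereal)
      have "gterm p q0 = ereal (p * (Lg p - ln q0))" using qp by (simp add: gterm_def Lg_def)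
      hence "eventually (\<lambda>T. s < ereal (p * (Lg p - Lg (q T)))) F"
        using order_tendstoD(1)[OF L] s by simp
      thus ?thesis by (rule eventually_mono) (meson gterm_ge less_le_trans)
    next
      case True
      show ?thesis
      proof (cases s)
        case (real r)
        define e where "e = exp (Lg p - r / p)"
        have e: "e > 0" by (simp add: e_def)
        have "eventually (\<lambda>T. q T < e) F" using order_tendstoD(2)[OF lim] True e by simp
        thus ?thesis using ev
        proof (eventually_elim)
          case (elim T)
          show ?case
          proof (cases "q T = 0")
            case True thus ?thesis using pn real by (simp add: gterm_def)
          next
            case False
            hence qT: "q T > 0" using elim by simp
            have "ln (q T) < ln e" using qT elim by simp
            hence "ln (q T) < Lg p - r / p" by (simp add: e_def)
            hence "r < p * (Lg p - ln (q T))" using pp by (simp add: field_simps)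
            thus ?thesis using False qT real by (simp add: gterm_def Lg_def)
          qed
        qed
      next
        case PInf thus ?thesis using s by simp
      next
        case MInf thus ?thesis using gterm_not_minf by (simp add: ereal_MInfty_lessI)
      qed
    qed
  qed
qed

lemma ereal_split_less:
  fixes a b s :: ereal
  assumes "s < a + b" "a \<noteq> -\<infinity>" "b \<noteq> -\<infinity>"
  shows "\<exists>a' b'. a' < a \<and> b' < b \<and> s \<le> a' + b'"
proof (cases s)
  case MInf
  thus ?thesis using assms by (intro exI[of _ "-\<infinity>"]) auto
next
  case PInf thus ?thesis using assms by simp
next
  case (real r)
  show ?thesis
  proof (cases a)
    case (real \<alpha>) note a = this
    show ?thesis
    proof (cases b)
      case (real \<beta>)
      define d where "d = (\<alpha> + \<beta> - r) / 2"
      have "d > 0" using assms(1) \<open>s = ereal r\<close> a real by (simp add: d_def)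
      thus ?thesis using a real \<open>s = ereal r\<close>
        by (intro exI[of _ "ereal (\<alpha> - d)"] exI[of _ "ereal (\<beta> - d)"]) (auto simp: d_def)
    next
      case PInf
      thus ?thesis using a \<open>s = ereal r\<close>
        by (intro exI[of _ "ereal (\<alpha> - 1)"] exI[of _ "ereal (r - \<alpha> + 1)"]) auto
    qed (use assms in auto)
  next
    case PInf note a = this
    show ?thesis
    proof (cases b)
      case (real \<beta>)
      thus ?thesis using a \<open>s = ereal r\<close>
        by (intro exI[of _ "ereal (r - \<beta> + 1)"] exI[of _ "ereal (\<beta> - 1)"]) auto
    next
      case PInf
      thus ?thesis using a \<open>s = ereal r\<close>
        by (intro exI[of _ "ereal r"] exI[of _ "0"]) auto
    qed (use assms in auto)
  qed (use assms in auto)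
qed

lemma lsc_add:
  assumes f: "lscF F f a" and g: "lscF F g b" and "\<And>T. f T \<noteq> -\<infinity>" "\<And>T. g T \<noteq> -\<infinity>"
    and "a \<noteq> -\<infinity>" "b \<noteq> -\<infinity>"
  shows "lscF F (\<lambda>T. f T + g T) (a + b)"
  unfolding lscF_def
proof (intro allI impI)
  fix s assume "s < a + b"
  then obtain a' b' where ab: "a' < a" "b' < b" "s \<le> a' + b'" using ereal_split_less assms by blast
  have "eventually (\<lambda>T. a' < f T) F" "eventually (\<lambda>T. b' < g T) F"
    using f g ab unfolding lscF_def by auto
  thus "eventually (\<lambda>T. s < f T + g T) F"
  proof eventually_elim
    case (elim T)
    thus ?case using ab(3) ereal_add_strict_mono2[OF elim] by (rule_tac le_less_trans) auto
  qed
qed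

lemma sum_not_minf:
  fixes g :: "'b \<Rightarrow> ereal"
  shows "finite I \<Longrightarrow> (\<And>x. x \<in> I \<Longrightarrow> g x \<noteq> -\<infinity>) \<Longrightarrow> sum g I \<noteq> -\<infinity>"
  by (induction I rule: finite_induct) auto

lemma lsc_sum:
  assumes "finite I" "\<And>x. x \<in> I \<Longrightarrow> lscF F (f x) (v x)"
    "\<And>x T. x \<in> I \<Longrightarrow> f x T \<noteq> -\<infinity>" "\<And>x. x \<in> I \<Longrightarrow> v x \<noteq> -\<infinity>"
  shows "lscF F (\<lambda>T. \<Sum>x\<in>I. f x T) (\<Sum>x\<in>I. v x)"
  using assms
proof (induction I rule: finite_induct)
  case empty
  thus ?case by (simp add: lscF_def)
next
  case (insert y I)
  have nm1: "(\<Sum>x\<in>I. f x T) \<noteq> -\<infinity>" for T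
    by (rule sum_not_minf[OF insert(1)]) (use insert.prems in blast)
  have nm2: "(\<Sum>x\<in>I. v x) \<noteq> -\<infinity>"
    by (rule sum_not_minf[OF insert(1)]) (use insert.prems in blast)
  note nm = nm1 nm2
  show ?case unfolding sum.insert[OF insert(1,2)]
    by (rule lsc_add) (use insert nm in auto)
qed



lemma psd_one: "psd n (1\<^sub>m n)"
proof -
  have "0 \<le> Re (cinner v (1\<^sub>m n *\<^sub>v v))" if "v \<in> carrier_vec n" for v
  proof -
    have "cinner v (1\<^sub>m n *\<^sub>v v) = (\<Sum>i<n. cnj (v $ i) * v $ i)"
      using that by (simp add: cinner_def)
    also have "\<dots> = (\<Sum>i<n. complex_of_real ((cmod (v $ i))^2))"
      by (intro sum.cong refl) (subst complex_norm_square, simp add: mult.commute)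
    finally show ?thesis by (simp add: Re_sum sum_nonneg)
  qed
  thus ?thesis by (simp add: psd_def hermitian_def cadj_one)
qed

lemma povm_one: "povm n 1 (\<lambda>_. 1\<^sub>m n)"
  by (simp add: povm_def psd_one)

lemma povm_one': "povm n (Suc 0) (\<lambda>_. 1\<^sub>m n)"
  using povm_one[of n] by simp

lemma qrel_ent_not_minf: "qrel_ent A B \<noteq> -\<infinity>"
  by (simp add: qrel_ent_def)

lemma meas_rel_ent_not_minf: "meas_rel_ent n \<rho> \<tau> \<noteq> -\<infinity>"
proof -
  have "qrel_ent (meas 1 (\<lambda>_. 1\<^sub>m n) \<rho>) (meas 1 (\<lambda>_. 1\<^sub>m n) \<tau>) \<le> meas_rel_ent n \<rho> \<tau>"
    unfolding meas_rel_ent_def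
    by (rule SUP_upper2[of "(1, \<lambda>_. 1\<^sub>m n)"]) (auto simp: povm_one povm_one')
  thus ?thesis using qrel_ent_not_minf
    by (metis MInfty_eq_minfinity ereal_infty_less_eq(2))
qed

lemma DM_lsc:
  assumes rho: "psd n \<rho>" and Y: "psd m Y" and T0: "channel m n T0"
    and s: "s < meas_rel_ent n \<rho> (T0 Y)"
  shows "\<exists>d>0. \<forall>T. channel m n T \<and> chan_dist m n T0 T < d \<longrightarrow> s < meas_rel_ent n \<rho> (T Y)"
proof -
  have Yc: "Y \<in> carrier_mat m m" using psd_carrier[OF Y] .
  obtain k M where M: "povm n k M" and sk: "s < qrel_ent (meas k M \<rho>) (meas k M (T0 Y))"
    using s unfolding meas_rel_ent_def less_SUP_iff by auto
  have Mx: "psd n (M x)" if "x < k" for x using M that by (simp add: povm_def)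
  define p where "p x = Re (mtrace (\<rho> * M x))" for x
  define q where "q x T = Re (mtrace (T Y * M x))" for x T
  have TY: "psd n (T Y)" if "channel m n T" for T using channel_psd[OF that Y] .
  have val: "qrel_ent (meas k M \<rho>) (meas k M (T Y)) = (\<Sum>x<k. gterm (p x) (q x T))"
    if "channel m n T" for T
    unfolding qrel_ent_meas[OF rho TY[OF that] M] p_def q_def ..
  have "lscF (chF m n T0) (\<lambda>T. \<Sum>x<k. gterm (p x) (q x T)) (\<Sum>x<k. gterm (p x) (q x T0))"
  proof (rule lsc_sum)
    fix x assume x: "x \<in> {..<k}"
    show "lscF (chF m n T0) (\<lambda>T. gterm (p x) (q x T)) (gterm (p x) (q x T0))"
    proof (rule lsc_gterm)
      show "0 \<le> p x" unfolding p_def using mtrace_psd(2)[OF rho Mx] x by simp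
      show "0 \<le> q x T0" unfolding q_def using mtrace_psd(2)[OF TY[OF T0] Mx] x by simp
      show "((\<lambda>T. q x T) \<longlongrightarrow> q x T0) (chF m n T0)"
        unfolding q_def by (rule tendsto_trace[OF T0 Yc psd_carrier[OF Mx]]) (use x in simp)
      show "eventually (\<lambda>T. 0 \<le> q x T) (chF m n T0)"
        unfolding eventually_chF q_def
        by (intro exI[of _ 1]) (use mtrace_psd(2)[OF TY Mx] x in auto)
    qed
  qed (auto simp: gterm_not_minf)
  moreover have "s < (\<Sum>x<k. gterm (p x) (q x T0))" using sk val[OF T0] by simp
  ultimately have "eventually (\<lambda>T. s < (\<Sum>x<k. gterm (p x) (q x T))) (chF m n T0)"
    unfolding lscF_def by blast
  then obtain d where d: "d > 0" "\<And>T. channel m n T \<Longrightarrow> chan_dist m n T0 T < d \<Longrightarrow> s < (\<Sum>x<k. gterm (p x) (q x T))"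
    unfolding eventually_chF by blast
  show ?thesis
  proof (intro exI[of _ d] conjI allI impI)
    show "d > 0" by fact
    fix T assume H: "channel m n T \<and> chan_dist m n T0 T < d"
    have "qrel_ent (meas k M \<rho>) (meas k M (T Y)) \<le> meas_rel_ent n \<rho> (T Y)"
      unfolding meas_rel_ent_def by (rule SUP_upper2[of "(k, M)"]) (use M in auto)
    thus "s < meas_rel_ent n \<rho> (T Y)" using d(2)[of T] H val[of T] by simp
  qed
qed

lemma ereal_minus_less_iff:
  assumes "x \<noteq> -\<infinity>"
  shows "ereal a - x < ereal r \<longleftrightarrow> ereal (a - r) < x"
  using assms by (cases x) auto

theorem lemma7:
  fixes n m :: nat and \<sigma> \<rho> :: "complex mat" and N :: "complex mat \<Rightarrow> complex mat"
  assumes "density n \<sigma>"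
    and "density n \<rho>" and "supp \<rho> \<subseteq> supp \<sigma>"
    and "channel n m N"
  shows "usc_on {T. channel m n T} (chan_dist m n) (\<lambda>T. Delta n T \<sigma> N \<rho>)"
proof -
  have rho: "psd n \<rho>" using assms(2) by (simp add: density_def)
  have Y: "psd m (N \<rho>)" using channel_psd[OF assms(4) rho] .
  define C0 where "C0 = qrel_ent \<rho> \<sigma> - qrel_ent (N \<rho>) (N \<sigma>)"
  define DM where "DM T = meas_rel_ent n \<rho> (T (N \<rho>))" for T
  have D: "Delta n T \<sigma> N \<rho> = C0 - DM T" for T unfolding Delta_def C0_def DM_def ..
  have nm: "DM T \<noteq> -\<infinity>" for T unfolding DM_def by (rule meas_rel_ent_not_minf)
  show ?thesis
    unfolding usc_on_def D
  proof (intro ballI allI impI)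
    fix T0 c assume T0: "T0 \<in> {T. channel m n T}" and lt: "C0 - DM T0 < c"
    show "\<exists>\<delta>>0. \<forall>y\<in>{T. channel m n T}. chan_dist m n T0 y < \<delta> \<longrightarrow> C0 - DM y < c"
    proof (cases C0)
      case PInf
      thus ?thesis using lt by simp
    next
      case MInf
      have "C0 - DM T = -\<infinity>" for T using MInf nm[of T] by (cases "DM T") auto
      thus ?thesis using lt by (intro exI[of _ 1]) auto
    next
      case (real a)
      show ?thesis
      proof (cases c)
        case PInf
        have "C0 - DM T < \<infinity>" for T using real nm[of T] by (cases "DM T") auto
        thus ?thesis using PInf by (intro exI[of _ 1]) auto
      next
        case MInf thus ?thesis using lt by simp
      next
        case (real r)
        have "ereal (a - r) < DM T0" using lt \<open>C0 = ereal a\<close> real ereal_minus_less_iff[OF nm] by simp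
        then obtain d where d: "d > 0"
          "\<And>T. channel m n T \<and> chan_dist m n T0 T < d \<Longrightarrow> ereal (a - r) < DM T"
          using DM_lsc[OF rho Y] T0 unfolding DM_def by blast
        show ?thesis
          using d \<open>C0 = ereal a\<close> real ereal_minus_less_iff[OF nm] by (intro exI[of _ d]) auto
      qed
    qed
  qed
qed

end
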